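(* Let $\lambda>1$, $b\ge 0$, and let $(s_n)_{n\ge0}\subset[0,1)$, $(s'_n)_{n\ge0}\subset(0,1]$, $(r_n)_{n\ge0}\subset\mathbb{R}$. Consider the planar system $$x_{n+1}=s_nx_n+s'_ny_n,\qquad y_{n+1}=x_n^{\lambda}e^{r_n-bx_{n+1}-x_n},\qquad n\ge0,$$ with $(x_0,y_0)\in[0,\infty)^2$. Put $a_n=r_{n-1}+\ln s'_n$ for $n\ge1$, and assume $s\doteq\sup_n s_n<1$, $A\doteq\sup_{n\ge1}a_n<\infty$, $\inf_n s'_n>0$. If $A<\ln(1-s)+(\lambda-1)[1-\ln(\lambda-1)]$, then every orbit $\{(x_n,y_n)\}$ with $(x_0,y_0)\in[0,\infty)^2$ converges to $(0,0)$. *)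

theory Defs
  imports "HOL-Analysis.Analysis"
begin

end

theory Submission
  imports Defs
begin

lemma hbound:
  fixes u k :: real assumes u: "u \<ge> 0" and k: "k > 0"
  shows "u powr k * exp (-u) \<le> k powr k * exp (-k)"
proof (cases "u = 0")
  case True then show ?thesis using k by simp
next
  case False
  then have up: "u > 0" using u by simp
  have "ln (u / k) \<le> u / k - 1" using up k by (intro ln_le_minus_one) simp
  then have "ln u - ln k \<le> u / k - 1" using up k by (simp add: ln_div)
  then have "k * (ln u - ln k) \<le> k * (u / k - 1)" using k by (intro mult_left_mono) auto
  then have "k * ln u - u \<le> k * ln k - k" using k by (simp add: algebra_simps)
  then have "exp (k * ln u - u) \<le> exp (k * ln k - k)" by simp
  moreover have "exp (k * ln u - u) = u powr k * exp (-u)" using up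
    by (simp add: powr_def exp_diff exp_minus field_simps mult.commute)
  moreover have "exp (k * ln k - k) = k powr k * exp (-k)" using k
    by (simp add: powr_def exp_diff exp_minus field_simps mult.commute)
  ultimately show ?thesis by simp
qed

theorem mainTheorem2:
  fixes lam b :: real and s s' r x y :: "nat \<Rightarrow> real"
  assumes lam: "lam > 1" and b: "b \<ge> 0"
    and s_range: "\<And>n. s n \<in> {0..<1}"
    and s'_range: "\<And>n. s' n \<in> {0<..1}"
    and sup_s: "(SUP n. s n) < 1"
    and A_bdd: "bdd_above ((\<lambda>n. r (n - 1) + ln (s' n)) ` {1..})"
    and inf_s': "(INF n. s' n) > 0"
    and A_bound: "(SUP n\<in>{1..}. r (n - 1) + ln (s' n))
                    < ln (1 - (SUP n. s n)) + (lam - 1) * (1 - ln (lam - 1))"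
    and x0: "x 0 \<ge> 0" and y0: "y 0 \<ge> 0"
    and x_rec: "\<And>n. x (Suc n) = s n * x n + s' n * y n"
    and y_rec: "\<And>n. y (Suc n) = x n powr lam * exp (r n - b * x (Suc n) - x n)"
  shows "x \<longlonglongrightarrow> 0 \<and> y \<longlonglongrightarrow> 0"
proof -
  define s0 where "s0 = (SUP n. s n)"
  define A where "A = (SUP n\<in>{1..}. r (n - 1) + ln (s' n))"
  define \<sigma> where "\<sigma> = (INF n. s' n)"
  define k where "k = lam - 1"
  define c where "c = exp A * (k powr k * exp (-k))"
  have kpos: "k > 0" using lam k_def by simp
  have bs: "bdd_above (range s)" using s_range by (auto intro!: bdd_aboveI[of _ 1] less_imp_le)
  have sle: "s n \<le> s0" for n unfolding s0_def using cSUP_upper[OF _ bs, of n] by simp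
  have s0nn: "s0 \<ge> 0" using sle[of 0] s_range[of 0] by simp
  have s0lt: "s0 < 1" using sup_s s0_def by simp
  have ale: "r n + ln (s' (Suc n)) \<le> A" for n
  proof -
    have "r (Suc n - 1) + ln (s' (Suc n)) \<le> A" unfolding A_def
      using cSUP_upper[OF _ A_bdd, of "Suc n"] by simp
    then show ?thesis by simp
  qed
  have bs': "bdd_below (range s')" using s'_range by (auto intro!: bdd_belowI[of _ 0] less_imp_le)
  have sige: "\<sigma> \<le> s' n" for n unfolding \<sigma>_def using cINF_lower[OF bs', of n] by simp
  have sigpos: "\<sigma> > 0" using inf_s' \<sigma>_def by simp
  have cpos: "c > 0" unfolding c_def using kpos by simp
  have clt: "c < 1 - s0"
  proof -
    have "A < ln (1 - s0) + k * (1 - ln k)" using A_bound s0_def A_def k_def by simp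
    then have "exp A < exp (ln (1 - s0) + k * (1 - ln k))" by simp
    also have "\<dots> = (1 - s0) * exp k / k powr k" using s0lt kpos
      by (simp add: exp_add exp_diff powr_def algebra_simps)
    finally have "exp A * (k powr k * exp (-k)) < (1 - s0) * exp k / k powr k * (k powr k * exp (-k))"
      using kpos by (intro mult_strict_right_mono) auto
    also have "\<dots> = 1 - s0" using kpos by (simp add: exp_minus field_simps)
    finally show ?thesis unfolding c_def .
  qed
  have nn: "x n \<ge> 0 \<and> y n \<ge> 0" for n
  proof (induction n)
    case 0 then show ?case using x0 y0 by simp
  next
    case (Suc n)
    have "s n \<ge> 0" "s' n \<ge> 0" using s_range[of n] s'_range[of n] by auto
    then show ?case using Suc x_rec[of n] y_rec[of n] by simp
  qed
  have rec2: "x (Suc (Suc n)) \<le> s0 * x (Suc n) + c * x n" for n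
  proof -
    have xn: "x n \<ge> 0" "x (Suc n) \<ge> 0" using nn by auto
    have sp: "s' (Suc n) > 0" using s'_range[of "Suc n"] by simp
    have t1: "s (Suc n) * x (Suc n) \<le> s0 * x (Suc n)" using sle xn by (intro mult_right_mono) auto
    have "s' (Suc n) * y (Suc n) = x n powr lam * exp (r n + ln (s' (Suc n)) - b * x (Suc n) - x n)"
      using sp y_rec[of n] by (simp add: exp_add exp_diff)
    also have "\<dots> \<le> x n powr lam * exp (A - x n)"
    proof -
      have "b * x (Suc n) \<ge> 0" using b xn by simp
      then show ?thesis using ale[of n] xn by (intro mult_left_mono) auto
    qed
    also have "\<dots> = exp A * x n * (x n powr k * exp (- x n))"
    proof (cases "x n = 0")
      case True then show ?thesis by simp
    next
      case False
      then have "x n > 0" using xn by simp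
      then have "x n powr lam = x n * x n powr k" unfolding k_def
        using powr_add[of "x n" 1 "lam - 1"] by simp
      then show ?thesis by (simp add: exp_diff exp_minus field_simps)
    qed
    also have "\<dots> \<le> exp A * x n * (k powr k * exp (-k))"
      using hbound[OF xn(1) kpos] xn by (intro mult_left_mono) auto
    also have "\<dots> = c * x n" unfolding c_def by simp
    finally show ?thesis using x_rec[of "Suc n"] t1 by simp
  qed
  define q where "q = s0 + c"
  have q0: "q > 0" "q < 1" using q_def s0nn cpos clt by auto
  define p where "p = sqrt q"
  have p0: "p > 0" "p < 1" using q0 p_def by auto
  define m where "m n = max (x (Suc n)) (x n)" for n
  have xm: "x n \<le> m n" "x (Suc n) \<le> m n" for n unfolding m_def by auto
  have key: "x (Suc (Suc n)) \<le> q * m n" for n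
  proof -
    have "s0 * x (Suc n) \<le> s0 * m n" using s0nn xm by (intro mult_left_mono) auto
    moreover have "c * x n \<le> c * m n" using cpos xm by (intro mult_left_mono) auto
    ultimately show ?thesis using rec2[of n] unfolding q_def by (simp add: distrib_right)
  qed
  have mnn: "m n \<ge> 0" for n using xm nn order_trans by blast
  have mdec: "m (Suc n) \<le> m n" for n
  proof -
    have "q * m n \<le> m n" using q0 mnn[of n] mult_right_mono[of q 1 "m n"] by simp
    then show ?thesis using key[of n] xm[of n] unfolding m_def by simp
  qed
  have mstep: "m (Suc (Suc n)) \<le> q * m n" for n
  proof -
    have "x (Suc (Suc (Suc n))) \<le> q * m (Suc n)" by (rule key)
    also have "\<dots> \<le> q * m n" using mdec q0 by (intro mult_left_mono) auto
    finally show ?thesis using key[of n] unfolding m_def by simp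
  qed
  have mb: "m n \<le> (m 0 / p) * p ^ n" for n
  proof (induction n rule: less_induct)
    case (less n)
    have m0: "m 0 \<ge> 0" unfolding m_def using nn by (simp add: le_max_iff_disj)
    show ?case
    proof (cases n)
      case 0 then show ?thesis using p0 m0 mult_right_mono[of p 1 "m 0"] by (simp add: field_simps)
    next
      case (Suc n')
      show ?thesis
      proof (cases n')
        case 0 then show ?thesis using Suc p0 mdec[of 0] by simp
      next
        case (Suc j)
        have "m n \<le> q * m j" using mstep[of j] \<open>n = Suc n'\<close> Suc by simp
        also have "\<dots> \<le> q * ((m 0 / p) * p ^ j)"
          using less[of j] \<open>n = Suc n'\<close> Suc q0 by (intro mult_left_mono) auto
        also have "\<dots> = (m 0 / p) * p ^ n" proof -
          have qq: "q = p * p" using q0 p_def by simp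
          show ?thesis unfolding qq using \<open>n = Suc n'\<close> Suc p0 by (simp add: field_simps)
        qed
        finally show ?thesis .
      qed
    qed
  qed
  have xlim: "x \<longlonglongrightarrow> 0"
  proof (rule tendsto_sandwich[of "\<lambda>_. 0" _ _ "\<lambda>n. (m 0 / p) * p ^ n"])
    show "\<forall>\<^sub>F n in sequentially. 0 \<le> x n" using nn by simp
    show "\<forall>\<^sub>F n in sequentially. x n \<le> (m 0 / p) * p ^ n"
      using mb unfolding m_def by (auto intro: order_trans[OF max.cobounded2])
    show "(\<lambda>n. 0) \<longlonglongrightarrow> (0::real)" by simp
    have "(\<lambda>n. p ^ n) \<longlonglongrightarrow> 0" using p0 by (intro LIMSEQ_power_zero) simp
    then show "(\<lambda>n. (m 0 / p) * p ^ n) \<longlonglongrightarrow> 0" by (rule tendsto_mult_right_zero)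
  qed
  have ylim: "y \<longlonglongrightarrow> 0"
  proof (rule tendsto_sandwich[of "\<lambda>_. 0" _ _ "\<lambda>n. x (Suc n) / \<sigma>"])
    show "\<forall>\<^sub>F n in sequentially. 0 \<le> y n" using nn by simp
    have "y n \<le> x (Suc n) / \<sigma>" for n
    proof -
      have "\<sigma> * y n \<le> s' n * y n" using sige nn by (intro mult_right_mono) auto
      also have "\<dots> \<le> x (Suc n)" using x_rec[of n] s_range[of n] nn by simp
      finally show ?thesis using sigpos by (simp add: field_simps)
    qed
    then show "\<forall>\<^sub>F n in sequentially. y n \<le> x (Suc n) / \<sigma>" by simp
    show "(\<lambda>n. 0) \<longlonglongrightarrow> (0::real)" by simp
    have "(\<lambda>n. x (Suc n)) \<longlonglongrightarrow> 0" using xlim by (rule LIMSEQ_Suc)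
    then show "(\<lambda>n. x (Suc n) / \<sigma>) \<longlonglongrightarrow> 0" by (rule tendsto_divide_zero)
  qed
  show ?thesis using xlim ylim by simp
qed

end
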